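(* Let $\mathbf{x}_t$ solve $\mathrm d\mathbf{x}_t=a(\mathbf{x}_t)\,\mathrm dt+b(\mathbf{x}_t)\,\mathrm d\mathbf{w}_t$ on $\mathbb R^d$ with $\mathbf{x}_0\sim p_{\mathrm{data}}$, let $q_t$ be its transition density, and let $U_s(\mathbf{y}):=-\log\int q_s(\mathbf{y}\mid\mathbf{x})\exp(-U(\mathbf{x}))\,\mathrm d\mathbf{x}$ (with $U_0=U$). Then $$\mathrm{ED}_{q_t}(p_{\mathrm{data}},U)=-\mathbb E\Big[\int_0^t\mathrm dU_s(\mathbf{x}_s)\Big],$$ where $\int_0^t\mathrm dU_s(\mathbf{x}_s)$ is the Itô integral, i.e. $U_t(\mathbf{x}_t)=U_0(\mathbf{x}_0)+\int_0^t\mathrm dU_s(\mathbf{x}_s)$, and the expectation is over the process $(\mathbf{x}_s)_{0\le s\le t}$.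
   Context: $\mathrm{ED}_q(p_{\mathrm{data}},U):=\mathbb E_{p_{\mathrm{data}}(\mathbf{x})}[U(\mathbf{x})]-\mathbb E_{p_{\mathrm{data}}(\mathbf{x})}\mathbb E_{q(\mathbf{y}\mid\mathbf{x})}[U_q(\mathbf{y})]$ with $U_q(\mathbf{y}):=-\log\int q(\mathbf{y}\mid\mathbf{x})\exp(-U(\mathbf{x}))\,\mathrm d\mathbf{x}$. *)

theory Defs
  imports "HOL-Probability.Probability"
begin

text \<open>Conditional densities are written as functions of two arguments:
  q y x stands for q(y | x). All integrals are Lebesgue integrals w.r.t. lborel
  on a Euclidean space (playing the role of R^d).\<close>

definition U_q :: "('a::euclidean_space \<Rightarrow> 'a \<Rightarrow> real) \<Rightarrow> ('a \<Rightarrow> real) \<Rightarrow> 'a \<Rightarrow> real" where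
  "U_q q U y = - ln (\<integral>x. q y x * exp (- U x) \<partial>lborel)"

definition ED :: "('a::euclidean_space \<Rightarrow> 'a \<Rightarrow> real) \<Rightarrow> ('a \<Rightarrow> real) \<Rightarrow> ('a \<Rightarrow> real) \<Rightarrow> real" where
  "ED q p U = (\<integral>x. p x * U x \<partial>lborel)
              - (\<integral>x. p x * (\<integral>y. q y x * U_q q U y \<partial>lborel) \<partial>lborel)"

definition U_s :: "(real \<Rightarrow> 'a::euclidean_space \<Rightarrow> 'a \<Rightarrow> real) \<Rightarrow> ('a \<Rightarrow> real) \<Rightarrow> real \<Rightarrow> 'a \<Rightarrow> real" where
  "U_s q U s = (if s = 0 then U else U_q (q s) U)"

text \<open>The Ito integral of dU_s(x_s) over [0,t], characterised as in the paper by
  U_t(x_t) = U_0(x_0) + integral.\<close>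
definition ito_dU :: "(real \<Rightarrow> 'a::euclidean_space \<Rightarrow> 'a \<Rightarrow> real) \<Rightarrow> ('a \<Rightarrow> real)
    \<Rightarrow> (real \<Rightarrow> 'w \<Rightarrow> 'a) \<Rightarrow> real \<Rightarrow> 'w \<Rightarrow> real" where
  "ito_dU q U X t \<omega> = U_s q U t (X t \<omega>) - U_s q U 0 (X 0 \<omega>)"

end

theory Submission
  imports Defs
begin

theorem proposition4:
  fixes M :: "'w measure"
    and X :: "real \<Rightarrow> 'w \<Rightarrow> 'a::euclidean_space"
    and p_data :: "'a \<Rightarrow> real"
    and q :: "real \<Rightarrow> 'a \<Rightarrow> 'a \<Rightarrow> real"
    and U :: "'a \<Rightarrow> real"
    and t :: real
  assumes "prob_space M"
    and "\<And>s. 0 \<le> s \<Longrightarrow> X s \<in> borel_measurable M"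
    and "t > 0"
    and "\<And>x. p_data x \<ge> 0"
    and "\<And>s x y. 0 < s \<Longrightarrow> q s y x \<ge> 0"
    and "\<And>s x. 0 < s \<Longrightarrow> (\<integral>y. q s y x \<partial>lborel) = 1"
    and "U \<in> borel_measurable borel"
    and "distributed M (lborel \<Otimes>\<^sub>M lborel) (\<lambda>\<omega>. (X 0 \<omega>, X t \<omega>))
           (\<lambda>(x, y). ennreal (p_data x * q t y x))"
    and "integrable M (\<lambda>\<omega>. U (X 0 \<omega>))"
    and "U_s q U t \<in> borel_measurable borel"
    and "integrable M (\<lambda>\<omega>. U_s q U t (X t \<omega>))"
  shows "ED (q t) p_data U = - (\<integral>\<omega>. ito_dU q U X t \<omega> \<partial>M)"
proof -
  define F where "F = (\<lambda>z::'a \<times> 'a. p_data (fst z) * q t (snd z) (fst z))"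
  define V where "V = U_s q U t"
  have Vq: "V = U_q (q t) U" using assms(3) by (simp add: V_def U_s_def)
  have eq: "(\<lambda>(x, y). ennreal (p_data x * q t y x)) = (\<lambda>z. ennreal (F z))"
    by (auto simp: F_def)
  have D: "distributed M (lborel \<Otimes>\<^sub>M lborel) (\<lambda>\<omega>. (X 0 \<omega>, X t \<omega>)) (\<lambda>z. ennreal (F z))"
    using assms(8) eq by simp
  have Fpos: "\<And>z. 0 \<le> F z" using assms(3,4,5) by (simp add: F_def)
  have Um: "(\<lambda>z. U (fst z)) \<in> borel_measurable (lborel \<Otimes>\<^sub>M lborel)"
    using assms(7) by measurable
  have Vm: "(\<lambda>z. V (snd z)) \<in> borel_measurable (lborel \<Otimes>\<^sub>M lborel)"
    using assms(10) unfolding V_def by measurable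
  have IU: "integrable (lborel \<Otimes>\<^sub>M lborel) (\<lambda>z. F z * U (fst z))"
    using distributed_integrable[OF D Um] Fpos assms(9) by simp
  have IV: "integrable (lborel \<Otimes>\<^sub>M lborel) (\<lambda>z. F z * V (snd z))"
    using distributed_integrable[OF D Vm] Fpos assms(11) by (simp add: V_def)
  have EU: "(\<integral>\<omega>. U (X 0 \<omega>) \<partial>M) = (\<integral>x. p_data x * U x \<partial>lborel)"
  proof -
    have "(\<integral>\<omega>. U (X 0 \<omega>) \<partial>M) = (\<integral>z. F z * U (fst z) \<partial>(lborel \<Otimes>\<^sub>M lborel))"
      using distributed_integral[OF D Um] Fpos by simp
    also have "\<dots> = (\<integral>x. (\<integral>y. F (x, y) * U (fst (x, y)) \<partial>lborel) \<partial>lborel)"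
      using lborel_pair.integral_fst'[OF IU] by simp
    also have "\<dots> = (\<integral>x. p_data x * U x \<partial>lborel)"
    proof (rule Bochner_Integration.integral_cong[OF refl])
      fix x
      have "(\<integral>y. F (x, y) * U (fst (x, y)) \<partial>lborel) = (\<integral>y. (p_data x * U x) * q t y x \<partial>lborel)"
        by (simp add: F_def mult_ac)
      also have "\<dots> = p_data x * U x" using assms(3,6) by simp
      finally show "(\<integral>y. F (x, y) * U (fst (x, y)) \<partial>lborel) = p_data x * U x" .
    qed
    finally show ?thesis .
  qed
  have EV: "(\<integral>\<omega>. V (X t \<omega>) \<partial>M) = (\<integral>x. p_data x * (\<integral>y. q t y x * V y \<partial>lborel) \<partial>lborel)"
  proof -
    have "(\<integral>\<omega>. V (X t \<omega>) \<partial>M) = (\<integral>z. F z * V (snd z) \<partial>(lborel \<Otimes>\<^sub>M lborel))"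
      using distributed_integral[OF D Vm] Fpos by simp
    also have "\<dots> = (\<integral>x. (\<integral>y. F (x, y) * V (snd (x, y)) \<partial>lborel) \<partial>lborel)"
      using lborel_pair.integral_fst'[OF IV] by simp
    also have "\<dots> = (\<integral>x. p_data x * (\<integral>y. q t y x * V y \<partial>lborel) \<partial>lborel)"
    proof (rule Bochner_Integration.integral_cong[OF refl])
      fix x
      have "(\<integral>y. F (x, y) * V (snd (x, y)) \<partial>lborel) = (\<integral>y. p_data x * (q t y x * V y) \<partial>lborel)"
        by (simp add: F_def mult_ac)
      also have "\<dots> = p_data x * (\<integral>y. q t y x * V y \<partial>lborel)" by simp
      finally show "(\<integral>y. F (x, y) * V (snd (x, y)) \<partial>lborel) = p_data x * (\<integral>y. q t y x * V y \<partial>lborel)" .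
    qed
    finally show ?thesis .
  qed
  have "(\<integral>\<omega>. ito_dU q U X t \<omega> \<partial>M) = (\<integral>\<omega>. V (X t \<omega>) - U (X 0 \<omega>) \<partial>M)"
    by (simp add: ito_dU_def V_def U_s_def)
  also have "\<dots> = (\<integral>\<omega>. V (X t \<omega>) \<partial>M) - (\<integral>\<omega>. U (X 0 \<omega>) \<partial>M)"
    using assms(9,11) by (simp add: V_def)
  finally show ?thesis
    unfolding ED_def EU EV Vq[symmetric] by simp
qed

end
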